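(* Let $\mathcal{L}$ and $\mathcal{K}$ be two linkages in a directed graph $G$ and let $k \ge 1$, $\alpha,\beta \ge 1$ be integers. Let $U_1,\ldots,U_k$ be walks in $G$ such that the family $(U_i)_{i=1}^k$ has congestion $\alpha$, and for each $i$ let $\mathcal{U}_i$ be the family of paths of $\mathcal{L}$ that are subpaths of $U_i$. Similarly, let $W_1,\ldots,W_k$ be walks in $G$ such that $(W_i)_{i=1}^k$ has congestion $\beta$, and let $\mathcal{W}_i$ be the family of paths of $\mathcal{K}$ that are subpaths of $W_i$. If for every $1 \le i \leq k$ the subgraph of the intersection graph $I(\mathcal{L},\mathcal{K})$ induced by $\mathcal{U}_i\cup\mathcal{W}_i$ has average degree at least $2$, then $G$ contains a family of $k$ directed cycles of congestion $\alpha +\beta$.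
   Context: For $A,B\subseteq V(G)$ with $|A|=|B|$, a linkage from $A$ to $B$ is a set of $|A|$ pairwise vertex-disjoint directed paths each starting in $A$ and ending in $B$. A family of walks/cycles is of congestion $c$ if every vertex is visited at most $c$ times in total (each visit counted separately). The intersection graph $I(\mathcal{L},\mathcal{K})$ is the bipartite graph on $\mathcal{L}\cup\mathcal{K}$ in which $L\in\mathcal{L}$ and $K\in\mathcal{K}$ are adjacent iff they share a vertex. *)

theory Defs
  imports Complex_Main "HOL-Library.Sublist"
begin

definition digraph :: "'a set \<Rightarrow> ('a \<times> 'a) set \<Rightarrow> bool" where
  "digraph V E \<longleftrightarrow> finite V \<and> E \<subseteq> V \<times> V"

definition is_walk :: "'a set \<Rightarrow> ('a \<times> 'a) set \<Rightarrow> 'a list \<Rightarrow> bool" where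
  "is_walk V E W \<longleftrightarrow> W \<noteq> [] \<and> set W \<subseteq> V \<and>
     (\<forall>i. Suc i < length W \<longrightarrow> (W ! i, W ! Suc i) \<in> E)"

definition is_path :: "'a set \<Rightarrow> ('a \<times> 'a) set \<Rightarrow> 'a list \<Rightarrow> bool" where
  "is_path V E P \<longleftrightarrow> is_walk V E P \<and> distinct P"

definition is_cycle :: "'a set \<Rightarrow> ('a \<times> 'a) set \<Rightarrow> 'a list \<Rightarrow> bool" where
  "is_cycle V E C \<longleftrightarrow> is_path V E C \<and> (last C, hd C) \<in> E"

definition linkage_from_to ::
  "'a set \<Rightarrow> ('a \<times> 'a) set \<Rightarrow> 'a set \<Rightarrow> 'a set \<Rightarrow> 'a list set \<Rightarrow> bool" where
  "linkage_from_to V E A B L \<longleftrightarrow> A \<subseteq> V \<and> B \<subseteq> V \<and> card A = card B \<and>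
     finite L \<and> card L = card A \<and>
     (\<forall>P\<in>L. is_path V E P \<and> hd P \<in> A \<and> last P \<in> B) \<and>
     (\<forall>P\<in>L. \<forall>Q\<in>L. P \<noteq> Q \<longrightarrow> set P \<inter> set Q = {})"

definition linkage :: "'a set \<Rightarrow> ('a \<times> 'a) set \<Rightarrow> 'a list set \<Rightarrow> bool" where
  "linkage V E L \<longleftrightarrow> (\<exists>A B. linkage_from_to V E A B L)"

definition has_congestion :: "nat \<Rightarrow> (nat \<Rightarrow> 'a list) \<Rightarrow> nat \<Rightarrow> bool" where
  "has_congestion k W c \<longleftrightarrow> (\<forall>v. (\<Sum>i<k. count_list (W i) v) \<le> c)"

text \<open>The intersection graph I(L,K): bipartite graph on the disjoint union of L and K
  (tagged with Inl / Inr), edges {P,Q} for P \<in> L, Q \<in> K sharing a vertex.\<close>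
definition intersection_graph_edges ::
  "'a list set \<Rightarrow> 'a list set \<Rightarrow> ('a list + 'a list) set set" where
  "intersection_graph_edges L K =
     {{Inl P, Inr Q} | P Q. P \<in> L \<and> Q \<in> K \<and> set P \<inter> set Q \<noteq> {}}"

definition induced_edges :: "'v set set \<Rightarrow> 'v set \<Rightarrow> 'v set set" where
  "induced_edges Ed S = {e \<in> Ed. e \<subseteq> S}"

definition degree_in :: "'v set set \<Rightarrow> 'v \<Rightarrow> nat" where
  "degree_in Ed v = card {e \<in> Ed. v \<in> e}"

definition average_degree :: "'v set \<Rightarrow> 'v set set \<Rightarrow> real" where
  "average_degree S Ed = (\<Sum>v\<in>S. real (degree_in Ed v)) / real (card S)"

end

theory Submission
  imports Defs
begin


lemma walk_single: "is_walk V E [x] \<longleftrightarrow> x \<in> V"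
  by (auto simp: is_walk_def)

lemma walk_Cons2: "is_walk V E (x # y # zs) \<longleftrightarrow> x \<in> V \<and> (x, y) \<in> E \<and> is_walk V E (y # zs)"
proof
  assume h: "is_walk V E (x # y # zs)"
  then have "(x,y) \<in> E" unfolding is_walk_def by (metis Suc_less_eq length_Cons nth_Cons_0 nth_Cons_Suc zero_less_Suc)
  moreover have "is_walk V E (y # zs)" unfolding is_walk_def
  proof (intro conjI allI impI)
    fix i assume "Suc i < length (y#zs)"
    then have "Suc (Suc i) < length (x#y#zs)" by simp
    with h have "((x#y#zs)!Suc i, (x#y#zs)! Suc(Suc i)) \<in> E" unfolding is_walk_def by blast
    then show "((y # zs) ! i, (y # zs) ! Suc i) \<in> E" by simp
  qed (use h in \<open>auto simp: is_walk_def\<close>)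
  ultimately show "x \<in> V \<and> (x, y) \<in> E \<and> is_walk V E (y # zs)" using h by (auto simp: is_walk_def)
next
  assume h: "x \<in> V \<and> (x, y) \<in> E \<and> is_walk V E (y # zs)"
  show "is_walk V E (x # y # zs)" unfolding is_walk_def
  proof (intro conjI allI impI)
    fix i assume i: "Suc i < length (x # y # zs)"
    show "((x # y # zs) ! i, (x # y # zs) ! Suc i) \<in> E"
    proof (cases i)
      case 0 then show ?thesis using h by simp
    next
      case (Suc j) then show ?thesis using h i unfolding is_walk_def by auto
    qed
  qed (use h in \<open>auto simp: is_walk_def\<close>)
qed

lemma walk_append_left: "is_walk V E (xs @ ys) \<Longrightarrow> xs \<noteq> [] \<Longrightarrow> is_walk V E xs"
proof -
  assume h: "is_walk V E (xs @ ys)" and ne: "xs \<noteq> []"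
  show ?thesis unfolding is_walk_def
  proof (intro conjI allI impI)
    fix i assume i: "Suc i < length xs"
    then have "Suc i < length (xs @ ys)" by simp
    with h have "((xs@ys)!i, (xs@ys)! Suc i) \<in> E" unfolding is_walk_def by blast
    then show "(xs ! i, xs ! Suc i) \<in> E" using i by (simp add: nth_append)
  qed (use h ne in \<open>auto simp: is_walk_def\<close>)
qed

lemma walk_append_right: "is_walk V E (xs @ ys) \<Longrightarrow> ys \<noteq> [] \<Longrightarrow> is_walk V E ys"
proof (induction xs)
  case (Cons x xs) then show ?case
    by (cases "xs @ ys") (auto simp: walk_Cons2)
qed simp

lemma walk_join: "is_walk V E (xs @ [y]) \<Longrightarrow> is_walk V E (y # ys) \<Longrightarrow> is_walk V E (xs @ y # ys)"
proof (induction xs)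
  case (Cons x xs) then show ?case
    by (cases xs) (auto simp: walk_Cons2)
qed simp

lemma walk_last_edge: "is_walk V E (xs @ [y]) \<Longrightarrow> xs \<noteq> [] \<Longrightarrow> (last xs, y) \<in> E"
proof (induction xs)
  case (Cons x xs) then show ?case
    by (cases xs) (auto simp: walk_Cons2)
qed simp

lemma closed_walk_cycle:
  "is_walk V E c \<Longrightarrow> (last c, hd c) \<in> E \<Longrightarrow> \<exists>C. is_cycle V E C \<and> set C \<subseteq> set c"
proof (induction "length c" arbitrary: c rule: less_induct)
  case less
  show ?case
  proof (cases "distinct c")
    case True then show ?thesis using less.prems by (auto simp: is_cycle_def is_path_def)
  next
    case False
    then obtain a b d y where c: "c = a @ [y] @ b @ [y] @ d" using not_distinct_decomp by blast
    have w: "is_walk V E ((y # b) @ [y])"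
      using less.prems(1) unfolding c
      by (metis append.assoc append_Cons append_Nil list.distinct(1) walk_append_left walk_append_right)
    have 1: "is_walk V E (y # b)" using walk_append_left[OF w] by simp
    have 2: "(last (y # b), hd (y # b)) \<in> E" using walk_last_edge[OF w] by simp
    have "length (y # b) < length c" unfolding c by simp
    from less.hyps[OF this 1 2] show ?thesis unfolding c by auto
  qed
qed

lemma nondistinct_walk_cycle:
  "is_walk V E c \<Longrightarrow> \<not> distinct c \<Longrightarrow> \<exists>C. is_cycle V E C \<and> set C \<subseteq> set c"
proof -
  assume wc: "is_walk V E c" and nd: "\<not> distinct c"
  obtain a b d y where c: "c = a @ [y] @ b @ [y] @ d" using not_distinct_decomp[OF nd] by blast
  have w: "is_walk V E ((y # b) @ [y])"
    using wc unfolding c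
    by (metis append.assoc append_Cons append_Nil list.distinct(1) walk_append_left walk_append_right)
  have 1: "is_walk V E (y # b)" using walk_append_left[OF w] by simp
  have 2: "(last (y # b), hd (y # b)) \<in> E" using walk_last_edge[OF w] by simp
  from closed_walk_cycle[OF 1 2] show ?thesis unfolding c by auto
qed

definition seg :: "'a list \<Rightarrow> nat \<Rightarrow> nat \<Rightarrow> 'a list" where
  "seg u i j = drop i (take (Suc j) u)"

lemma seg_props:
  assumes "i \<le> j" "j < length u"
  shows "seg u i j \<noteq> []" "hd (seg u i j) = u ! i" "last (seg u i j) = u ! j"
    "length (seg u i j) = Suc j - i" "set (seg u i j) \<subseteq> set u"
proof -
  have l: "length (take (Suc j) u) = Suc j" using assms by simp
  show "seg u i j \<noteq> []" using assms l unfolding seg_def by simp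
  show "hd (seg u i j) = u ! i" using assms l unfolding seg_def by (simp add: hd_drop_conv_nth)
  show "last (seg u i j) = u ! j" using assms l unfolding seg_def by (simp add: last_drop take_Suc_conv_app_nth)
  show "length (seg u i j) = Suc j - i" using assms l unfolding seg_def by simp
  show "set (seg u i j) \<subseteq> set u" unfolding seg_def by (meson order_trans set_drop_subset set_take_subset)
qed

lemma seg_walk:
  assumes "is_walk V E u" "i \<le> j" "j < length u"
  shows "is_walk V E (seg u i j)"
proof -
  have "take (Suc j) u \<noteq> []" using assms by auto
  then have t: "is_walk V E (take (Suc j) u)"
    using walk_append_left[of V E "take (Suc j) u" "drop (Suc j) u"] assms(1) by simp
  have "drop i (take (Suc j) u) \<noteq> []" using assms by auto
  then show ?thesis unfolding seg_def
    using walk_append_right[of V E "take i (take (Suc j) u)" "drop i (take (Suc j) u)"] t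
    by (metis append_take_drop_id)
qed

lemma crossing_cycle:
  assumes wu: "is_walk V E u" and ww: "is_walk V E w"
    and ab: "a < b" "b < length u" and cd: "c < d" "d < length w"
    and eq1: "u ! a = w ! d" and eq2: "u ! b = w ! c"
  shows "\<exists>C. is_cycle V E C \<and> set C \<subseteq> set u \<union> set w"
proof -
  define xs where "xs = seg u a b"
  define ys where "ys = seg w c d"
  have xs: "xs \<noteq> []" "hd xs = u ! a" "last xs = u ! b" "length xs = Suc b - a" "set xs \<subseteq> set u"
    using seg_props[of a b u] ab unfolding xs_def by auto
  have ys: "ys \<noteq> []" "hd ys = w ! c" "last ys = w ! d" "length ys = Suc d - c" "set ys \<subseteq> set w"
    using seg_props[of c d w] cd unfolding ys_def by auto
  have wx: "is_walk V E xs" unfolding xs_def using seg_walk[OF wu] ab by simp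
  have wy: "is_walk V E ys" unfolding ys_def using seg_walk[OF ww] cd by simp
  have xs2: "xs = butlast xs @ [u ! b]" using xs by (metis append_butlast_last_id)
  have ys2: "ys = w ! c # tl ys" using ys by (metis list.collapse)
  have "is_walk V E (butlast xs @ u ! b # tl ys)"
    using walk_join[of V E "butlast xs" "u ! b" "tl ys"] wx wy xs2 ys2 eq2 by metis
  moreover have "butlast xs @ u ! b # tl ys = xs @ tl ys" using xs2 by (metis append.assoc append_Cons append_Nil)
  ultimately have wz: "is_walk V E (xs @ tl ys)" by simp
  have "tl ys \<noteq> []" using ys cd by (metis Suc_diff_le Suc_less_eq length_Cons length_greater_0_conv less_or_eq_imp_le ys2 zero_less_diff)
  then have lz: "last (xs @ tl ys) = u ! a" using ys eq1 by (metis last_appendR last_tl)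
  have "u ! a \<in> set (tl (xs @ tl ys))"
  proof -
    have "tl (xs @ tl ys) = tl xs @ tl ys" using xs by simp
    moreover have "u ! a \<in> set (tl ys)" using lz \<open>tl ys \<noteq> []\<close> by (metis last_appendR last_in_set)
    ultimately show ?thesis by simp
  qed
  moreover have "hd (xs @ tl ys) = u ! a" using xs by simp
  ultimately have "\<not> distinct (xs @ tl ys)"
    by (metis distinct.simps(2) list.collapse list.sel(2) list.set(1) empty_iff)
  from nondistinct_walk_cycle[OF wz this] obtain C where "is_cycle V E C" "set C \<subseteq> set (xs @ tl ys)" by blast
  moreover have "set (xs @ tl ys) \<subseteq> set u \<union> set w" using xs ys by (auto dest: list.set_sel(2))
  ultimately show ?thesis by blast
qed



definition pos :: "'a list \<Rightarrow> 'a \<Rightarrow> nat" where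
  "pos xs x = (THE i. i < length xs \<and> xs ! i = x)"

lemma pos_in: "distinct xs \<Longrightarrow> x \<in> set xs \<Longrightarrow> pos xs x < length xs \<and> xs ! pos xs x = x"
  unfolding pos_def by (rule theI'[OF distinct_Ex1])

lemma pos_nth: "distinct xs \<Longrightarrow> i < length xs \<Longrightarrow> pos xs (xs ! i) = i"
  unfolding pos_def by (rule the_equality) (auto simp: nth_eq_iff_index_eq)

lemma sublist_pos_range:
  assumes "distinct u" "u = a @ P @ b" "m < length u" "u ! m \<in> set P"
  shows "length a \<le> m \<and> m < length a + length P"
proof (rule ccontr)
  assume "\<not> ?thesis"
  then consider "m < length a" | "length a + length P \<le> m" by linarith
  then show False
  proof cases
    case 1
    then have "u ! m \<in> set a" using assms(2) by (simp add: nth_append)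
    then show False using assms by auto
  next
    case 2
    then have n: "\<not> (m - length a < length P)" "\<not> m < length a" by linarith+
    then have "u ! m = b ! (m - length a - length P)" using assms(2) by (simp add: nth_append)
    moreover have "m - length a - length P < length b" using assms(2,3) 2 by simp
    ultimately have "u ! m \<in> set b" by simp
    then show False using assms by auto
  qed
qed

lemma sublist_convex:
  assumes "distinct u" "sublist P u" "i \<le> j" "j \<le> l" "l < length u"
    "u ! i \<in> set P" "u ! l \<in> set P"
  shows "u ! j \<in> set P"
proof -
  obtain a b where u: "u = a @ P @ b" using assms(2) unfolding sublist_def by blast
  have 1: "length a \<le> i" using sublist_pos_range[OF assms(1) u _ assms(6)] assms by simp
  have 2: "l < length a + length P" using sublist_pos_range[OF assms(1) u _ assms(7)] assms by simp
  have n: "j - length a < length P" "\<not> j < length a" using 1 2 assms(3,4) by linarith+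
  have "u ! j = P ! (j - length a)" using u n by (simp add: nth_append)
  moreover have "j - length a < length P" using 1 2 assms(3,4) by simp
  ultimately show ?thesis by simp
qed



context
  fixes u w :: "'a list" and L K :: "'a list set"
  assumes du: "distinct u" and dw: "distinct w"
    and nc: "\<And>a b c d. a < b \<Longrightarrow> b < length u \<Longrightarrow> c < d \<Longrightarrow> d < length w \<Longrightarrow>
              u ! a = w ! d \<Longrightarrow> u ! b = w ! c \<Longrightarrow> False"
    and dL: "\<forall>P\<in>L. \<forall>Q\<in>L. P \<noteq> Q \<longrightarrow> set P \<inter> set Q = {}"
    and dK: "\<forall>P\<in>K. \<forall>Q\<in>K. P \<noteq> Q \<longrightarrow> set P \<inter> set Q = {}"
begin

definition "XX = set u \<inter> set w"
definition "key A = Max (pos u ` (A \<inter> XX))"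

lemma mono_pos:
  assumes "x \<in> XX" "y \<in> XX" "pos u x \<le> pos u y"
  shows "pos w x \<le> pos w y"
proof (rule ccontr)
  assume "\<not> ?thesis"
  then have h: "pos w y < pos w x" by simp
  have x1: "pos u x < length u" "u ! pos u x = x" using pos_in[OF du] assms(1) unfolding XX_def by auto
  have y1: "pos u y < length u" "u ! pos u y = y" using pos_in[OF du] assms(2) unfolding XX_def by auto
  have x2: "pos w x < length w" "w ! pos w x = x" using pos_in[OF dw] assms(1) unfolding XX_def by auto
  have y2: "pos w y < length w" "w ! pos w y = y" using pos_in[OF dw] assms(2) unfolding XX_def by auto
  have "x \<noteq> y" using h by auto
  then have "pos u x < pos u y" using assms(3) x1 y1 by (metis le_neq_implies_less)
  from nc[OF this y1(1) h x2(1)] x1 y1 x2 y2 show False by simp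
qed

lemma convexQ:
  assumes "sublist Q w" "x \<in> set Q" "y \<in> set Q" "z \<in> XX" "x \<in> XX" "y \<in> XX"
    "pos u x \<le> pos u z" "pos u z \<le> pos u y"
  shows "z \<in> set Q"
proof -
  have a: "pos w x \<le> pos w z" "pos w z \<le> pos w y" using mono_pos assms by auto
  have x2: "pos w x < length w" "w ! pos w x = x" using pos_in[OF dw] assms(5) unfolding XX_def by auto
  have y2: "pos w y < length w" "w ! pos w y = y" using pos_in[OF dw] assms(6) unfolding XX_def by auto
  have z2: "pos w z < length w" "w ! pos w z = z" using pos_in[OF dw] assms(4) unfolding XX_def by auto
  from sublist_convex[OF dw assms(1) a y2(1)] x2 y2 z2 assms show ?thesis by simp
qed

lemma convexP:
  assumes "sublist P u" "x \<in> set P" "z \<in> set P" "y \<in> set u"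
    "pos u x \<le> pos u y" "pos u y \<le> pos u z"
  shows "y \<in> set P"
proof -
  have su: "set P \<subseteq> set u" using assms(1) by (rule set_mono_sublist)
  have x2: "pos u x < length u" "u ! pos u x = x" using pos_in[OF du] assms(2) su by auto
  have y2: "pos u y < length u" "u ! pos u y = y" using pos_in[OF du] assms(4) by auto
  have z2: "pos u z < length u" "u ! pos u z = z" using pos_in[OF du] assms(3) su by auto
  from sublist_convex[OF du assms(1) assms(5,6) z2(1)] x2 y2 z2 assms show ?thesis by simp
qed

lemma key_props:
  assumes "finite A" "A \<inter> XX \<noteq> {}"
  shows "\<exists>z \<in> A \<inter> XX. key A = pos u z" "\<And>x. x \<in> A \<inter> XX \<Longrightarrow> pos u x \<le> key A"
proof -
  have f: "finite (pos u ` (A \<inter> XX))" using assms(1) by simp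
  show "\<exists>z \<in> A \<inter> XX. key A = pos u z" unfolding key_def using Max_in[OF f] assms(2) by auto
  show "\<And>x. x \<in> A \<inter> XX \<Longrightarrow> pos u x \<le> key A" unfolding key_def using Max_ge[OF f] by auto
qed

lemma key1:
  assumes "sublist P u" "sublist Q w" "set P \<inter> set Q \<noteq> {}" "key (set P) \<le> key (set Q)"
  shows "u ! key (set P) \<in> set P \<inter> set Q"
proof -
  have su: "set P \<subseteq> set u" "set Q \<subseteq> set w" using assms(1,2) by (auto dest: set_mono_sublist)
  obtain x where x: "x \<in> set P" "x \<in> set Q" using assms(3) by blast
  then have xX: "x \<in> XX" using su unfolding XX_def by auto
  obtain z where z: "z \<in> set P \<inter> XX" "key (set P) = pos u z" using key_props(1)[of "set P"] x xX by blast
  obtain y where y: "y \<in> set Q \<inter> XX" "key (set Q) = pos u y" using key_props(1)[of "set Q"] x xX by blast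
  have "pos u x \<le> pos u z" using key_props(2)[of "set P" x] x xX z by auto
  moreover have "pos u z \<le> pos u y" using assms(4) z y by simp
  ultimately have "z \<in> set Q" using convexQ[OF assms(2) x(2), of y z] y z xX by auto
  moreover have "u ! pos u z = z" using pos_in[OF du] z unfolding XX_def by auto
  ultimately show ?thesis using z by auto
qed

lemma key2:
  assumes "sublist P u" "sublist Q w" "set P \<inter> set Q \<noteq> {}" "key (set Q) < key (set P)"
  shows "u ! key (set Q) \<in> set P \<inter> set Q"
proof -
  have su: "set P \<subseteq> set u" "set Q \<subseteq> set w" using assms(1,2) by (auto dest: set_mono_sublist)
  obtain x where x: "x \<in> set P" "x \<in> set Q" using assms(3) by blast
  then have xX: "x \<in> XX" using su unfolding XX_def by auto
  obtain z where z: "z \<in> set P \<inter> XX" "key (set P) = pos u z" using key_props(1)[of "set P"] x xX by blast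
  obtain y where y: "y \<in> set Q \<inter> XX" "key (set Q) = pos u y" using key_props(1)[of "set Q"] x xX by blast
  have "pos u x \<le> pos u y" using key_props(2)[of "set Q" x] x xX y by auto
  moreover have "pos u y \<le> pos u z" using assms(4) z y by simp
  ultimately have "y \<in> set P" using convexP[OF assms(1) x(1), of z y] y z unfolding XX_def by auto
  moreover have "u ! pos u y = y" using pos_in[OF du] y unfolding XX_def by auto
  ultimately show ?thesis using y by auto
qed

lemma card_R_less:
  assumes fL: "finite L" and fK: "finite K"
    and Rne: "{(P,Q). P \<in> {P\<in>L. sublist P u} \<and> Q \<in> {Q\<in>K. sublist Q w} \<and> set P \<inter> set Q \<noteq> {}} \<noteq> {}"
  shows "card {(P,Q). P \<in> {P\<in>L. sublist P u} \<and> Q \<in> {Q\<in>K. sublist Q w} \<and> set P \<inter> set Q \<noteq> {}}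
     < card (Inl ` {P\<in>L. sublist P u} \<union> Inr ` {Q\<in>K. sublist Q w})"
proof -
  define UU where "UU = {P\<in>L. sublist P u}"
  define WW where "WW = {Q\<in>K. sublist Q w}"
  define R where "R = {(P,Q). P \<in> UU \<and> Q \<in> WW \<and> set P \<inter> set Q \<noteq> {}}"
  define S where "S = Inl ` UU \<union> Inr ` WW"
  have Rne': "R \<noteq> {}" using Rne unfolding R_def UU_def WW_def by simp
  have fS: "finite S" unfolding S_def UU_def WW_def using fL fK by auto
  have fR: "finite R"
  proof -
    have "R \<subseteq> L \<times> K" unfolding R_def UU_def WW_def by auto
    then show ?thesis using fL fK finite_subset by blast
  qed
  define \<phi> where "\<phi> = (\<lambda>(P::'a list, Q::'a list). if key (set P) \<le> key (set Q) then (Inl P :: 'a list + 'a list) else Inr Q)"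
  have inj: "inj_on \<phi> R"
  proof (rule inj_onI)
    fix p1 p2 assume p1: "p1 \<in> R" and p2: "p2 \<in> R" and eq: "\<phi> p1 = \<phi> p2"
    obtain P1 Q1 where e1: "p1 = (P1, Q1)" by fastforce
    obtain P2 Q2 where e2: "p2 = (P2, Q2)" by fastforce
    have m1: "P1 \<in> L" "sublist P1 u" "Q1 \<in> K" "sublist Q1 w" "set P1 \<inter> set Q1 \<noteq> {}"
      using p1 e1 unfolding R_def UU_def WW_def by auto
    have m2: "P2 \<in> L" "sublist P2 u" "Q2 \<in> K" "sublist Q2 w" "set P2 \<inter> set Q2 \<noteq> {}"
      using p2 e2 unfolding R_def UU_def WW_def by auto
    show "p1 = p2"
    proof (cases "key (set P1) \<le> key (set Q1)")
      case c1: True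
      then have "\<phi> p1 = Inl P1" using e1 unfolding \<phi>_def by simp
      then have c2: "key (set P2) \<le> key (set Q2)" and PP: "P1 = P2" using eq e2 unfolding \<phi>_def
        by (auto split: if_splits)
      have "u ! key (set P1) \<in> set Q1" using key1[OF m1(2,4,5) c1] by blast
      moreover have "u ! key (set P1) \<in> set Q2" using key1[OF m2(2,4,5) c2] PP by blast
      ultimately have "Q1 = Q2" using dK m1(3) m2(3) by blast
      then show ?thesis using PP e1 e2 by simp
    next
      case c1: False
      then have "\<phi> p1 = Inr Q1" using e1 unfolding \<phi>_def by simp
      then have c2: "\<not> key (set P2) \<le> key (set Q2)" and QQ: "Q1 = Q2" using eq e2 unfolding \<phi>_def
        by (auto split: if_splits)
      have "u ! key (set Q1) \<in> set P1" using key2[OF m1(2,4,5)] c1 by simp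
      moreover have "u ! key (set Q1) \<in> set P2" using key2[OF m2(2,4,5)] c2 QQ by simp
      ultimately have "P1 = P2" using dL m1(1) m2(1) by blast
      then show ?thesis using QQ e1 e2 by simp
    qed
  qed
  define h where "h = case_sum (\<lambda>P. 2 * key (set P) + 1) (\<lambda>Q. 2 * key (set Q) + (2::nat))"
  define T where "T = (\<lambda>(P::'a list, Q::'a list). (Inl P :: 'a list + 'a list)) ` R \<union> (\<lambda>(P, Q). Inr Q) ` R"
  have fT: "finite T" unfolding T_def using fR by simp
  have neT: "T \<noteq> {}" unfolding T_def using Rne' by simp
  have TS: "T \<subseteq> S" unfolding T_def S_def R_def by auto
  have "Max (h ` T) \<in> h ` T" using fT neT by (intro Max_in) auto
  then obtain s0 where s0: "s0 \<in> T" "h s0 = Max (h ` T)" by auto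
  have s0max: "\<And>t. t \<in> T \<Longrightarrow> h t \<le> h s0" using s0(2) fT by simp
  have notin: "s0 \<notin> \<phi> ` R"
  proof
    assume "s0 \<in> \<phi> ` R"
    then obtain P Q where pq: "(P, Q) \<in> R" "s0 = \<phi> (P, Q)" by auto
    have iT: "Inl P \<in> T" "Inr Q \<in> T" unfolding T_def using pq(1) by force+
    show False
    proof (cases "key (set P) \<le> key (set Q)")
      case True
      then have "s0 = Inl P" using pq unfolding \<phi>_def by simp
      then show False using s0max[OF iT(2)] True unfolding h_def by simp
    next
      case False
      then have "s0 = Inr Q" using pq unfolding \<phi>_def by simp
      then show False using s0max[OF iT(1)] False unfolding h_def by simp
    qed
  qed
  have sub: "\<phi> ` R \<subseteq> S - {s0}"
  proof
    fix x assume "x \<in> \<phi> ` R"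
    then obtain P Q where pq: "(P, Q) \<in> R" "x = \<phi> (P, Q)" by auto
    then have "x \<in> S" unfolding \<phi>_def S_def R_def by auto
    then show "x \<in> S - {s0}" using notin \<open>x \<in> \<phi> ` R\<close> by auto
  qed
  have "card R = card (\<phi> ` R)" using card_image[OF inj] by simp
  also have "\<dots> \<le> card (S - {s0})" using card_mono[OF _ sub] fS by simp
  also have "\<dots> < card S" using fS s0(1) TS by (meson card_Diff1_less subsetD)
  finally show ?thesis unfolding R_def S_def UU_def WW_def .
qed

end



lemma handshake:
  assumes "finite S" "finite Ed" "\<forall>e\<in>Ed. e \<subseteq> S \<and> card e = 2"
  shows "(\<Sum>v\<in>S. degree_in Ed v) = 2 * card Ed"
proof -
  have "(\<Sum>v\<in>S. degree_in Ed v) = (\<Sum>v\<in>S. \<Sum>e\<in>Ed. of_bool (v \<in> e))"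
  proof (rule sum.cong)
    fix v
    have "{e \<in> Ed. v \<in> e} = Ed \<inter> {e. v \<in> e}" by blast
    then show "degree_in Ed v = (\<Sum>e\<in>Ed. of_bool (v \<in> e))"
      unfolding degree_in_def using assms(2) by simp
  qed simp
  also have "\<dots> = (\<Sum>e\<in>Ed. \<Sum>v\<in>S. of_bool (v \<in> e))" by (rule sum.swap)
  also have "\<dots> = (\<Sum>e\<in>Ed. card e)"
  proof (rule sum.cong)
    fix e assume "e \<in> Ed"
    then have "S \<inter> e = e" using assms(3) by auto
    then show "(\<Sum>v\<in>S. of_bool (v \<in> e)) = card e" using assms(1) by simp
  qed simp
  also have "\<dots> = (\<Sum>e\<in>Ed. 2)" using assms(3) by simp
  finally show ?thesis by simp
qed

lemma per_i:
  assumes L: "linkage V E L" and K: "linkage V E K"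
    and wu: "is_walk V E u" and ww: "is_walk V E w"
    and avg: "average_degree (Inl ` {P \<in> L. sublist P u} \<union> Inr ` {Q \<in> K. sublist Q w})
         (induced_edges (intersection_graph_edges L K)
            (Inl ` {P \<in> L. sublist P u} \<union> Inr ` {Q \<in> K. sublist Q w})) \<ge> 2"
  shows "\<exists>C. is_cycle V E C \<and> set C \<subseteq> set u \<union> set w"
proof -
  consider "\<not> distinct u" | "\<not> distinct w"
    | "\<exists>a b c d. a < b \<and> b < length u \<and> c < d \<and> d < length w \<and> u ! a = w ! d \<and> u ! b = w ! c"
    | "distinct u" "distinct w"
      "\<not> (\<exists>a b c d. a < b \<and> b < length u \<and> c < d \<and> d < length w \<and> u ! a = w ! d \<and> u ! b = w ! c)"
    by argo
  then show ?thesis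
  proof cases
    case 1 then show ?thesis using nondistinct_walk_cycle[OF wu] by blast
  next
    case 2 then show ?thesis using nondistinct_walk_cycle[OF ww] by blast
  next
    case 3 then show ?thesis using crossing_cycle[OF wu ww] by blast
  next
    case 4
    then have du: "distinct u" and dw: "distinct w" by simp_all
    have nc: "\<And>a b c d. a < b \<Longrightarrow> b < length u \<Longrightarrow> c < d \<Longrightarrow> d < length w \<Longrightarrow>
              u ! a = w ! d \<Longrightarrow> u ! b = w ! c \<Longrightarrow> False" using 4(3) by blast
  obtain A1 B1 where "linkage_from_to V E A1 B1 L" using L unfolding linkage_def by blast
  then have fL: "finite L" and dL: "\<forall>P\<in>L. \<forall>Q\<in>L. P \<noteq> Q \<longrightarrow> set P \<inter> set Q = {}"
    unfolding linkage_from_to_def by simp_all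
  obtain A2 B2 where "linkage_from_to V E A2 B2 K" using K unfolding linkage_def by blast
  then have fK: "finite K" and dK: "\<forall>P\<in>K. \<forall>Q\<in>K. P \<noteq> Q \<longrightarrow> set P \<inter> set Q = {}"
    unfolding linkage_from_to_def by simp_all
  define UU where "UU = {P\<in>L. sublist P u}"
  define WW where "WW = {Q\<in>K. sublist Q w}"
  define R where "R = {(P,Q). P \<in> UU \<and> Q \<in> WW \<and> set P \<inter> set Q \<noteq> {}}"
  define S where "S = Inl ` UU \<union> Inr ` WW"
  define Ed where "Ed = induced_edges (intersection_graph_edges L K) S"
  define g where "g = (\<lambda>(P::'a list, Q::'a list). {Inl P, Inr Q :: 'a list + 'a list})"
  have EdR: "Ed = g ` R"
  proof
    show "Ed \<subseteq> g ` R"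
    proof
      fix e assume "e \<in> Ed"
      then have e1: "e \<in> intersection_graph_edges L K" and e5: "e \<subseteq> S"
        unfolding Ed_def induced_edges_def by simp_all
      from e1 obtain P Q where e: "e = {Inl P, Inr Q}" "P \<in> L" "Q \<in> K" "set P \<inter> set Q \<noteq> {}"
        unfolding intersection_graph_edges_def by blast
      have "Inl P \<in> S" "Inr Q \<in> S" using e5 e(1) by auto
      then have "P \<in> UU" "Q \<in> WW" unfolding S_def by auto
      then have "(P, Q) \<in> R" unfolding R_def using e(4) by simp
      moreover have "e = g (P, Q)" unfolding g_def using e(1) by simp
      ultimately show "e \<in> g ` R" by blast
    qed
  next
    show "g ` R \<subseteq> Ed"
    proof
      fix e assume "e \<in> g ` R"
      then obtain P Q where pq: "(P, Q) \<in> R" "e = {Inl P, Inr Q}" unfolding g_def by auto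
      then have m: "P \<in> UU" "Q \<in> WW" "set P \<inter> set Q \<noteq> {}" unfolding R_def by auto
      then have "P \<in> L" "Q \<in> K" unfolding UU_def WW_def by auto
      then have "e \<in> intersection_graph_edges L K"
        unfolding intersection_graph_edges_def using pq(2) m(3) by blast
      moreover have "e \<subseteq> S" using pq(2) m unfolding S_def by auto
      ultimately show "e \<in> Ed" unfolding Ed_def induced_edges_def by simp
    qed
  qed
  have inj: "inj_on g R"
  proof (rule inj_onI)
    fix x y assume "x \<in> R" "y \<in> R" "g x = g y"
    obtain P Q where x: "x = (P, Q)" by (cases x)
    obtain P' Q' where y: "y = (P', Q')" by (cases y)
    note xy = x y
    have gx: "g x = {Inl P, Inr Q}" unfolding g_def x by simp
    have gy: "g y = {Inl P', Inr Q'}" unfolding g_def y by simp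
    have eq: "{Inl P, Inr Q} = {Inl P', Inr Q' :: 'a list + 'a list}" using \<open>g x = g y\<close> gx gy by simp
    have "Inl P \<in> {Inl P', Inr Q' :: 'a list + 'a list}" unfolding eq[symmetric] by simp
    then have "P = P'" by simp
    have "Inr Q \<in> {Inl P', Inr Q' :: 'a list + 'a list}" unfolding eq[symmetric] by simp
    then have "Q = Q'" by simp
    show "x = y" using xy \<open>P = P'\<close> \<open>Q = Q'\<close> by simp
  qed
  have fS: "finite S" unfolding S_def UU_def WW_def using fL fK by auto
  have fR: "finite R"
  proof -
    have "R \<subseteq> L \<times> K" unfolding R_def UU_def WW_def by auto
    then show ?thesis using fL fK finite_subset by blast
  qed
  have fEd: "finite Ed" using EdR fR by simp
  have cEd: "card Ed = card R" using EdR card_image[OF inj] by simp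
  have edges: "\<forall>e\<in>Ed. e \<subseteq> S \<and> card e = 2"
    using EdR unfolding g_def R_def S_def by auto
  have hs: "(\<Sum>v\<in>S. real (degree_in Ed v)) = real (2 * card Ed)"
    using handshake[OF fS fEd edges] by (metis of_nat_sum)
  have avg': "2 \<le> real (2 * card Ed) / real (card S)"
    using avg hs unfolding average_degree_def Ed_def S_def UU_def WW_def by simp
  have cS: "card S > 0"
  proof (rule ccontr)
    assume "\<not> card S > 0"
    then have "card S = 0" by simp
    then show False using avg' by simp
  qed
  have "card S \<le> card Ed" using avg' cS by (simp add: field_simps)
  then have "card S \<le> card R" using cEd by simp
  then have Rne: "R \<noteq> {}" using cS fR by auto
  have "card R < card S"
    unfolding R_def S_def UU_def WW_def
    apply (rule card_R_less[where u=u and w=w and L=L and K=K])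
    apply (rule du)
    apply (rule dw)
    apply (erule (5) nc)
    apply (rule dL)
    apply (rule dK)
    apply (rule fL)
    apply (rule fK)
    using Rne unfolding R_def S_def UU_def WW_def by simp
  with \<open>card S \<le> card R\<close> show ?thesis by simp
  qed
qed



lemma count_distinct_le1: "distinct xs \<Longrightarrow> count_list xs v \<le> 1"
  by (induction xs) auto

theorem lemma17:
  fixes V :: "'a set" and E :: "('a \<times> 'a) set"
    and L K :: "'a list set" and k \<alpha> \<beta> :: nat
    and U W :: "nat \<Rightarrow> 'a list"
  assumes G: "digraph V E"
    and L: "linkage V E L" and K: "linkage V E K"
    and k: "k \<ge> 1" and \<alpha>: "\<alpha> \<ge> 1" and \<beta>: "\<beta> \<ge> 1"
    and U_walks: "\<forall>i<k. is_walk V E (U i)" and U_cong: "has_congestion k U \<alpha>"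
    and W_walks: "\<forall>i<k. is_walk V E (W i)" and W_cong: "has_congestion k W \<beta>"
    and avg: "\<forall>i<k.
       average_degree (Inl ` {P \<in> L. sublist P (U i)} \<union> Inr ` {Q \<in> K. sublist Q (W i)})
         (induced_edges (intersection_graph_edges L K)
            (Inl ` {P \<in> L. sublist P (U i)} \<union> Inr ` {Q \<in> K. sublist Q (W i)})) \<ge> 2"
  shows "\<exists>C :: nat \<Rightarrow> 'a list. (\<forall>i<k. is_cycle V E (C i)) \<and> has_congestion k C (\<alpha> + \<beta>)"
proof -
  have ex: "\<forall>i. i < k \<longrightarrow> (\<exists>C. is_cycle V E C \<and> set C \<subseteq> set (U i) \<union> set (W i))"
  proof (intro allI impI)
    fix i assume "i < k"
    then show "\<exists>C. is_cycle V E C \<and> set C \<subseteq> set (U i) \<union> set (W i)"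
      using per_i[OF L K, of "U i" "W i"] U_walks W_walks avg by blast
  qed
  obtain C where C: "\<forall>i. i < k \<longrightarrow> is_cycle V E (C i) \<and> set (C i) \<subseteq> set (U i) \<union> set (W i)"
    using choice_iff'[THEN iffD1, OF ex] by blast
  have "has_congestion k C (\<alpha> + \<beta>)" unfolding has_congestion_def
  proof
    fix v
    have pt: "count_list (C i) v \<le> count_list (U i) v + count_list (W i) v" if i: "i < k" for i
    proof (cases "v \<in> set (C i)")
      case True
      have "distinct (C i)" using C i unfolding is_cycle_def is_path_def by blast
      then have "count_list (C i) v \<le> 1" by (rule count_distinct_le1)
      moreover have "v \<in> set (U i) \<or> v \<in> set (W i)" using C i True by blast
      then have "1 \<le> count_list (U i) v + count_list (W i) v"
        using count_list_0_iff[of "U i" v] count_list_0_iff[of "W i" v] by linarith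
      ultimately show ?thesis by linarith
    next
      case False
      then show ?thesis by simp
    qed
    have "(\<Sum>i<k. count_list (C i) v) \<le> (\<Sum>i<k. count_list (U i) v + count_list (W i) v)"
      by (rule sum_mono) (use pt in simp)
    also have "\<dots> = (\<Sum>i<k. count_list (U i) v) + (\<Sum>i<k. count_list (W i) v)"
      by (rule sum.distrib)
    also have "\<dots> \<le> \<alpha> + \<beta>" using U_cong W_cong unfolding has_congestion_def by (meson add_mono)
    finally show "(\<Sum>i<k. count_list (C i) v) \<le> \<alpha> + \<beta>" .
  qed
  then show ?thesis using C by blast
qed


end
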